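(* Let $R$ be a nonempty set of reward functions $r':\mathcal{S}\times\mathcal{A}\to\mathbb{R}$ and define $$R^*(R)=\Big\{\,r^*:\mathcal{S}\times\mathcal{A}\to\mathbb{R}\ :\ \sum_{a\in\mathcal{A}}e^{r^*(s,a)-r'(s,a)}\le1\ \text{for all } s\in\mathcal{S},\ r'\in R\Big\}.$$ Then for every $r^*\in R^*(R)$ and every $\pi\in\Pi$, $$J(\pi,r^* )\le\inf_{r'\in R}\mathbb{E}_\pi\Big[\sum_{t=1}^T r'(s_t,a_t)\Big].$$
   Context: Finite-horizon MDP: finite state set $\mathcal{S}$, finite action set $\mathcal{A}$, horizon $T\ge1$, initial distribution $p_1$, transition kernel $p(s'\mid s,a)$. $\Pi$ is the set of Markov (possibly time-dependent) policies $\pi=(\pi_t(\cdot\mid s))_{t=1}^T$, with $\pi(a_t\mid s_t)$ meaning $\pi_t(a_t\mid s_t)$; $\mathbb{E}_\pi$ is expectation over trajectories generated by $\pi$. The MaxEnt RL objective is $J(\pi,r)=\mathbb{E}_\pi[\sum_{t=1}^T r(s_t,a_t)]+\mathcal{H}_\pi[a\mid s]$ with $\mathcal{H}_\pi[a\mid s]=\mathbb{E}_\pi[-\sum_{t=1}^T\log\pi(a_t\mid s_t)]$. *)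

theory Defs
  imports "HOL-Library.FuncSet" Complex_Main
begin

text \<open>Initial distribution p1 s, transition kernel p s a s' = p(s'|s,a),
  Markov policy pi t s a = pi_t(a|s) for t in 1..T.
  A trajectory is a function tau with tau t = (s_t, a_t) for t in 1..T
  (undefined elsewhere, extensional).\<close>

definition valid_mdp :: "('s::finite \<Rightarrow> real) \<Rightarrow> ('s \<Rightarrow> 'a::finite \<Rightarrow> 's \<Rightarrow> real) \<Rightarrow> bool" where
  "valid_mdp p1 p \<longleftrightarrow>
     (\<forall>s. p1 s \<ge> 0) \<and> (\<Sum>s\<in>UNIV. p1 s) = 1 \<and>
     (\<forall>s a s'. p s a s' \<ge> 0) \<and> (\<forall>s a. (\<Sum>s'\<in>UNIV. p s a s') = 1)"

definition policies :: "nat \<Rightarrow> (nat \<Rightarrow> 's::finite \<Rightarrow> 'a::finite \<Rightarrow> real) set" where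
  "policies T = {\<pi>. \<forall>t\<in>{1..T}. \<forall>s. (\<forall>a. \<pi> t s a \<ge> 0) \<and> (\<Sum>a\<in>UNIV. \<pi> t s a) = 1}"

definition trajectories :: "nat \<Rightarrow> (nat \<Rightarrow> 's::finite \<times> 'a::finite) set" where
  "trajectories T = {1..T} \<rightarrow>\<^sub>E UNIV"

definition traj_prob :: "nat \<Rightarrow> ('s::finite \<Rightarrow> real) \<Rightarrow> ('s \<Rightarrow> 'a::finite \<Rightarrow> 's \<Rightarrow> real)
    \<Rightarrow> (nat \<Rightarrow> 's \<Rightarrow> 'a \<Rightarrow> real) \<Rightarrow> (nat \<Rightarrow> 's \<times> 'a) \<Rightarrow> real" where
  "traj_prob T p1 p \<pi> \<tau> =
     p1 (fst (\<tau> 1))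
     * (\<Prod>t\<in>{1..T}. \<pi> t (fst (\<tau> t)) (snd (\<tau> t)))
     * (\<Prod>t\<in>{1..<T}. p (fst (\<tau> t)) (snd (\<tau> t)) (fst (\<tau> (Suc t))))"

definition traj_expect :: "nat \<Rightarrow> ('s::finite \<Rightarrow> real) \<Rightarrow> ('s \<Rightarrow> 'a::finite \<Rightarrow> 's \<Rightarrow> real)
    \<Rightarrow> (nat \<Rightarrow> 's \<Rightarrow> 'a \<Rightarrow> real) \<Rightarrow> ((nat \<Rightarrow> 's \<times> 'a) \<Rightarrow> real) \<Rightarrow> real" where
  "traj_expect T p1 p \<pi> g = (\<Sum>\<tau>\<in>trajectories T. traj_prob T p1 p \<pi> \<tau> * g \<tau>)"

definition expected_return :: "nat \<Rightarrow> ('s::finite \<Rightarrow> real) \<Rightarrow> ('s \<Rightarrow> 'a::finite \<Rightarrow> 's \<Rightarrow> real)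
    \<Rightarrow> (nat \<Rightarrow> 's \<Rightarrow> 'a \<Rightarrow> real) \<Rightarrow> ('s \<Rightarrow> 'a \<Rightarrow> real) \<Rightarrow> real" where
  "expected_return T p1 p \<pi> r =
     traj_expect T p1 p \<pi> (\<lambda>\<tau>. \<Sum>t=1..T. r (fst (\<tau> t)) (snd (\<tau> t)))"

definition causal_entropy :: "nat \<Rightarrow> ('s::finite \<Rightarrow> real) \<Rightarrow> ('s \<Rightarrow> 'a::finite \<Rightarrow> 's \<Rightarrow> real)
    \<Rightarrow> (nat \<Rightarrow> 's \<Rightarrow> 'a \<Rightarrow> real) \<Rightarrow> real" where
  "causal_entropy T p1 p \<pi> =
     traj_expect T p1 p \<pi> (\<lambda>\<tau>. - (\<Sum>t=1..T. ln (\<pi> t (fst (\<tau> t)) (snd (\<tau> t)))))"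

definition maxent_J :: "nat \<Rightarrow> ('s::finite \<Rightarrow> real) \<Rightarrow> ('s \<Rightarrow> 'a::finite \<Rightarrow> 's \<Rightarrow> real)
    \<Rightarrow> (nat \<Rightarrow> 's \<Rightarrow> 'a \<Rightarrow> real) \<Rightarrow> ('s \<Rightarrow> 'a \<Rightarrow> real) \<Rightarrow> real" where
  "maxent_J T p1 p \<pi> r = expected_return T p1 p \<pi> r + causal_entropy T p1 p \<pi>"

definition Rstar :: "('s::finite \<Rightarrow> 'a::finite \<Rightarrow> real) set \<Rightarrow> ('s \<Rightarrow> 'a \<Rightarrow> real) set" where
  "Rstar R = {rs. \<forall>s. \<forall>r'\<in>R. (\<Sum>a\<in>UNIV. exp (rs s a - r' s a)) \<le> 1}"

end

theory Submission
  imports Defs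
begin

lemma sum_traj_Suc:
  "(\<Sum>\<tau>\<in>trajectories (Suc T). F \<tau>) =
   (\<Sum>\<tau>\<in>(trajectories T :: (nat \<Rightarrow> 's::finite \<times> 'a::finite) set). \<Sum>x\<in>UNIV. F (\<tau>(Suc T := x)))"
proof -
  have e: "{1..Suc T} = insert (Suc T) {1..T}" by auto
  have "trajectories (Suc T) = (\<lambda>(y, g). g(Suc T := y)) ` ((UNIV::('s\<times>'a) set) \<times> trajectories T)"
    unfolding trajectories_def e PiE_insert_eq by simp
  moreover have "inj_on (\<lambda>(y, g). g(Suc T := y)) ((UNIV::('s\<times>'a) set) \<times> (trajectories T :: (nat \<Rightarrow> 's \<times> 'a) set))"
    unfolding trajectories_def using inj_combinator[of "Suc T" "{1..T}" "\<lambda>_. UNIV"] by simp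
  ultimately have "(\<Sum>\<tau>\<in>trajectories (Suc T). F \<tau>) = (\<Sum>(y,g)\<in>(UNIV::('s\<times>'a) set) \<times> trajectories T. F (g(Suc T := y)))"
    by (simp add: sum.reindex case_prod_unfold)
  also have "\<dots> = (\<Sum>y\<in>UNIV. \<Sum>g\<in>trajectories T. F (g(Suc T := y)))"
    by (simp add: sum.cartesian_product)
  also have "\<dots> = (\<Sum>g\<in>trajectories T. \<Sum>y\<in>UNIV. F (g(Suc T := y)))"
    by (rule sum.swap)
  finally show ?thesis .
qed

lemma traj_prob_Suc:
  assumes "T \<ge> 1"
  shows "traj_prob (Suc T) p1 p \<pi> (\<tau>(Suc T := x)) =
    traj_prob T p1 p \<pi> \<tau> * \<pi> (Suc T) (fst x) (snd x) * p (fst (\<tau> T)) (snd (\<tau> T)) (fst x)"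
proof -
  have a: "(\<Prod>t\<in>{1..Suc T}. \<pi> t (fst ((\<tau>(Suc T := x)) t)) (snd ((\<tau>(Suc T := x)) t)))
     = \<pi> (Suc T) (fst x) (snd x) * (\<Prod>t\<in>{1..T}. \<pi> t (fst (\<tau> t)) (snd (\<tau> t)))"
    by (simp add: prod.nat_ivl_Suc')
  have b: "(\<Prod>t\<in>{1..<Suc T}. p (fst ((\<tau>(Suc T := x)) t)) (snd ((\<tau>(Suc T := x)) t)) (fst ((\<tau>(Suc T := x)) (Suc t))))
     = (\<Prod>t\<in>{1..<T}. p (fst (\<tau> t)) (snd (\<tau> t)) (fst (\<tau> (Suc t)))) * p (fst (\<tau> T)) (snd (\<tau> T)) (fst x)"
    using assms by (simp add: prod.atLeastLessThan_Suc)
  show ?thesis unfolding traj_prob_def a b using assms by simp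
qed

lemma main_ind:
  fixes p1 :: "'s::finite \<Rightarrow> real" and p :: "'s \<Rightarrow> 'a::finite \<Rightarrow> 's \<Rightarrow> real"
  assumes "T \<ge> 1" and mdp: "valid_mdp p1 p" and pol: "\<pi> \<in> policies T"
  shows "(\<forall>\<tau>\<in>trajectories T. traj_prob T p1 p \<pi> \<tau> \<ge> 0) \<and>
         (\<Sum>\<tau>\<in>trajectories T. traj_prob T p1 p \<pi> \<tau>) = 1 \<and>
         (\<forall>h. (\<forall>t\<in>{1..T}. \<forall>s. (\<Sum>a\<in>UNIV. \<pi> t s a * h t s a) \<le> 0) \<longrightarrow>
            (\<Sum>\<tau>\<in>trajectories T. traj_prob T p1 p \<pi> \<tau> * (\<Sum>t=1..T. h t (fst (\<tau> t)) (snd (\<tau> t)))) \<le> 0)"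
  using assms(1) pol
proof (induction T rule: dec_induct)
  case base
  have pol1: "\<And>s a. \<pi> 1 s a \<ge> 0" "\<And>s. (\<Sum>a\<in>UNIV. \<pi> 1 s a) = 1"
    using base by (auto simp: policies_def)
  have p1: "\<And>s. p1 s \<ge> 0" "(\<Sum>s\<in>UNIV. p1 s) = 1" using mdp by (auto simp: valid_mdp_def)
  have tp: "\<And>x. traj_prob 1 p1 p \<pi> ((\<lambda>_. undefined)(Suc 0 := x)) = p1 (fst x) * \<pi> 1 (fst x) (snd x)"
    by (simp add: traj_prob_def)
  have t0: "(trajectories 0 :: (nat \<Rightarrow> 's \<times> 'a) set) = {\<lambda>_. undefined}" by (simp add: trajectories_def)
  have S: "\<And>F :: (nat \<Rightarrow> 's \<times> 'a) \<Rightarrow> real. (\<Sum>\<tau>\<in>trajectories 1. F \<tau>) = (\<Sum>x\<in>UNIV. F ((\<lambda>_. undefined)(Suc 0 := x)))"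
    unfolding One_nat_def sum_traj_Suc t0 by (simp add: fun_upd_def)
  have "\<forall>\<tau>\<in>trajectories 1. traj_prob 1 p1 p \<pi> \<tau> \<ge> 0"
  proof
    fix \<tau> :: "nat \<Rightarrow> 's \<times> 'a" assume "\<tau> \<in> trajectories 1"
    then have "\<tau> = (\<lambda>_. undefined)(Suc 0 := \<tau> 1)"
      by (auto simp: trajectories_def PiE_def extensional_def)
    then show "traj_prob 1 p1 p \<pi> \<tau> \<ge> 0" using tp p1 pol1
      by (metis mult_nonneg_nonneg)
  qed
  moreover have "(\<Sum>\<tau>\<in>trajectories 1. traj_prob 1 p1 p \<pi> \<tau>) = 1"
  proof -
    have "(\<Sum>\<tau>\<in>trajectories 1. traj_prob 1 p1 p \<pi> \<tau>) = (\<Sum>x\<in>UNIV. p1 (fst x) * \<pi> 1 (fst x) (snd x))"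
      unfolding S tp by simp
    also have "\<dots> = (\<Sum>s\<in>UNIV. \<Sum>a\<in>UNIV. p1 s * \<pi> 1 s a)"
      by (simp add: UNIV_Times_UNIV[symmetric] sum.cartesian_product case_prod_unfold del: UNIV_Times_UNIV)
    also have "\<dots> = 1" by (simp add: sum_distrib_left[symmetric] pol1[unfolded One_nat_def] p1)
    finally show ?thesis .
  qed
  moreover have "\<forall>h. (\<forall>t\<in>{1..1}. \<forall>s. (\<Sum>a\<in>UNIV. \<pi> t s a * h t s a) \<le> 0) \<longrightarrow>
            (\<Sum>\<tau>\<in>trajectories 1. traj_prob 1 p1 p \<pi> \<tau> * (\<Sum>t=1..1. h t (fst (\<tau> t)) (snd (\<tau> t)))) \<le> 0"
  proof (intro allI impI)
    fix h :: "nat \<Rightarrow> 's \<Rightarrow> 'a \<Rightarrow> real"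
    assume H: "\<forall>t\<in>{1..1}. \<forall>s. (\<Sum>a\<in>UNIV. \<pi> t s a * h t s a) \<le> 0"
    have "(\<Sum>\<tau>\<in>trajectories 1. traj_prob 1 p1 p \<pi> \<tau> * (\<Sum>t=1..1. h t (fst (\<tau> t)) (snd (\<tau> t))))
       = (\<Sum>x\<in>UNIV. p1 (fst x) * \<pi> 1 (fst x) (snd x) * h 1 (fst x) (snd x))"
      unfolding S tp by simp
    also have "\<dots> = (\<Sum>s\<in>UNIV. \<Sum>a\<in>UNIV. p1 s * \<pi> 1 s a * h 1 s a)"
      by (simp add: UNIV_Times_UNIV[symmetric] sum.cartesian_product case_prod_unfold del: UNIV_Times_UNIV)
    also have "\<dots> = (\<Sum>s\<in>UNIV. p1 s * (\<Sum>a\<in>UNIV. \<pi> 1 s a * h 1 s a))"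
      by (simp add: sum_distrib_left mult.assoc)
    also have "\<dots> \<le> 0"
      using H p1 by (intro sum_nonpos) (simp add: mult_nonneg_nonpos)
    finally show "(\<Sum>\<tau>\<in>trajectories 1. traj_prob 1 p1 p \<pi> \<tau> * (\<Sum>t=1..1. h t (fst (\<tau> t)) (snd (\<tau> t)))) \<le> 0" .
  qed
  ultimately show ?case by blast
next
  case (step T)
  have polT: "\<pi> \<in> policies T" using step.prems by (auto simp: policies_def)
  note IH = step.IH[OF polT]
  have polS: "\<And>s a. \<pi> (Suc T) s a \<ge> 0" "\<And>s. (\<Sum>a\<in>UNIV. \<pi> (Suc T) s a) = 1"
    using step.prems by (auto simp: policies_def)
  have pp: "\<And>s a s'. p s a s' \<ge> 0" "\<And>s a. (\<Sum>s'\<in>UNIV. p s a s') = 1"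
    using mdp by (auto simp: valid_mdp_def)
  have T1: "1 \<le> T" using step.hyps by simp
  have one: "\<And>s0 a0. (\<Sum>x\<in>UNIV. \<pi> (Suc T) (fst x) (snd x) * p s0 a0 (fst x)) = 1"
  proof -
    fix s0 a0
    have "(\<Sum>x\<in>UNIV. \<pi> (Suc T) (fst x) (snd x) * p s0 a0 (fst x)) = (\<Sum>s\<in>UNIV. \<Sum>a\<in>UNIV. \<pi> (Suc T) s a * p s0 a0 s)"
      by (simp add: UNIV_Times_UNIV[symmetric] sum.cartesian_product case_prod_unfold del: UNIV_Times_UNIV)
    also have "\<dots> = (\<Sum>s\<in>UNIV. p s0 a0 s)" by (simp add: sum_distrib_right[symmetric] polS)
    finally show "(\<Sum>x\<in>UNIV. \<pi> (Suc T) (fst x) (snd x) * p s0 a0 (fst x)) = 1" using pp by simp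
  qed
  have upd: "\<And>\<tau> x. (\<tau>(Suc T := x)) T = \<tau> T" by simp
  have tpS: "\<And>\<tau> x. traj_prob (Suc T) p1 p \<pi> (\<tau>(Suc T := x)) =
    traj_prob T p1 p \<pi> \<tau> * (\<pi> (Suc T) (fst x) (snd x) * p (fst (\<tau> T)) (snd (\<tau> T)) (fst x))"
    using traj_prob_Suc[OF T1] by (simp add: mult.assoc)
  have "\<forall>\<tau>\<in>trajectories (Suc T). traj_prob (Suc T) p1 p \<pi> \<tau> \<ge> 0"
  proof
    fix \<tau> :: "nat \<Rightarrow> 's \<times> 'a" assume A: "\<tau> \<in> trajectories (Suc T)"
    define \<sigma> where "\<sigma> = \<tau>(Suc T := undefined)"
    have "\<sigma> \<in> trajectories T" using A unfolding \<sigma>_def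
      by (auto simp: trajectories_def PiE_def extensional_def)
    moreover have "\<tau> = \<sigma>(Suc T := \<tau> (Suc T))" unfolding \<sigma>_def by simp
    ultimately show "traj_prob (Suc T) p1 p \<pi> \<tau> \<ge> 0"
    proof -
      assume s1: "\<sigma> \<in> trajectories T" and s2: "\<tau> = \<sigma>(Suc T := \<tau> (Suc T))"
      have "traj_prob T p1 p \<pi> \<sigma> \<ge> 0" using IH s1 by blast
      then show ?thesis using s2 tpS[of \<sigma> "\<tau> (Suc T)"] polS pp
        by (metis mult_nonneg_nonneg)
    qed
  qed
  moreover have "(\<Sum>\<tau>\<in>trajectories (Suc T). traj_prob (Suc T) p1 p \<pi> \<tau>) = 1"
    by (simp add: sum_traj_Suc tpS sum_distrib_left[symmetric] one IH)
  moreover have "\<forall>h. (\<forall>t\<in>{1..Suc T}. \<forall>s. (\<Sum>a\<in>UNIV. \<pi> t s a * h t s a) \<le> 0) \<longrightarrow>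
            (\<Sum>\<tau>\<in>trajectories (Suc T). traj_prob (Suc T) p1 p \<pi> \<tau> * (\<Sum>t=1..Suc T. h t (fst (\<tau> t)) (snd (\<tau> t)))) \<le> 0"
  proof (intro allI impI)
    fix h :: "nat \<Rightarrow> 's \<Rightarrow> 'a \<Rightarrow> real"
    assume H: "\<forall>t\<in>{1..Suc T}. \<forall>s. (\<Sum>a\<in>UNIV. \<pi> t s a * h t s a) \<le> 0"
    have HT: "\<forall>t\<in>{1..T}. \<forall>s. (\<Sum>a\<in>UNIV. \<pi> t s a * h t s a) \<le> 0" using H by auto
    have HS: "\<And>s. (\<Sum>a\<in>UNIV. \<pi> (Suc T) s a * h (Suc T) s a) \<le> 0" using H by auto
    define G where "G \<tau> = (\<Sum>t=1..T. h t (fst (\<tau> t)) (snd (\<tau> t)))" for \<tau> :: "nat \<Rightarrow> 's \<times> 'a"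
    have sumS: "\<And>\<tau> x. (\<Sum>t=1..Suc T. h t (fst ((\<tau>(Suc T := x)) t)) (snd ((\<tau>(Suc T := x)) t)))
        = h (Suc T) (fst x) (snd x) + G \<tau>"
      unfolding G_def by (simp add: sum.nat_ivl_Suc')
    have inner: "\<And>\<tau>. (\<Sum>x\<in>UNIV. \<pi> (Suc T) (fst x) (snd x) * p (fst (\<tau> T)) (snd (\<tau> T)) (fst x) * h (Suc T) (fst x) (snd x)) \<le> 0"
    proof -
      fix \<tau> :: "nat \<Rightarrow> 's \<times> 'a"
      have "(\<Sum>x\<in>UNIV. \<pi> (Suc T) (fst x) (snd x) * p (fst (\<tau> T)) (snd (\<tau> T)) (fst x) * h (Suc T) (fst x) (snd x))
         = (\<Sum>s\<in>UNIV. \<Sum>a\<in>UNIV. \<pi> (Suc T) s a * p (fst (\<tau> T)) (snd (\<tau> T)) s * h (Suc T) s a)"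
        by (simp add: UNIV_Times_UNIV[symmetric] sum.cartesian_product case_prod_unfold del: UNIV_Times_UNIV)
      also have "\<dots> = (\<Sum>s\<in>UNIV. p (fst (\<tau> T)) (snd (\<tau> T)) s * (\<Sum>a\<in>UNIV. \<pi> (Suc T) s a * h (Suc T) s a))"
        by (simp add: sum_distrib_left algebra_simps)
      also have "\<dots> \<le> 0" using HS pp by (intro sum_nonpos) (simp add: mult_nonneg_nonpos)
      finally show "(\<Sum>x\<in>UNIV. \<pi> (Suc T) (fst x) (snd x) * p (fst (\<tau> T)) (snd (\<tau> T)) (fst x) * h (Suc T) (fst x) (snd x)) \<le> 0" .
    qed
    have "(\<Sum>\<tau>\<in>trajectories (Suc T). traj_prob (Suc T) p1 p \<pi> \<tau> * (\<Sum>t=1..Suc T. h t (fst (\<tau> t)) (snd (\<tau> t))))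
       = (\<Sum>\<tau>\<in>trajectories T. \<Sum>x\<in>UNIV. traj_prob T p1 p \<pi> \<tau> * (\<pi> (Suc T) (fst x) (snd x) * p (fst (\<tau> T)) (snd (\<tau> T)) (fst x)) * (h (Suc T) (fst x) (snd x) + G \<tau>))"
      by (simp only: sum_traj_Suc tpS sumS)
    also have "\<dots> = (\<Sum>\<tau>\<in>trajectories T. traj_prob T p1 p \<pi> \<tau> * (\<Sum>x\<in>UNIV. \<pi> (Suc T) (fst x) (snd x) * p (fst (\<tau> T)) (snd (\<tau> T)) (fst x) * h (Suc T) (fst x) (snd x))
           + traj_prob T p1 p \<pi> \<tau> * G \<tau> * (\<Sum>x\<in>UNIV. \<pi> (Suc T) (fst x) (snd x) * p (fst (\<tau> T)) (snd (\<tau> T)) (fst x)))"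
      by (intro sum.cong refl) (simp add: sum_distrib_left sum.distrib algebra_simps)
    also have "\<dots> = (\<Sum>\<tau>\<in>trajectories T. traj_prob T p1 p \<pi> \<tau> * (\<Sum>x\<in>UNIV. \<pi> (Suc T) (fst x) (snd x) * p (fst (\<tau> T)) (snd (\<tau> T)) (fst x) * h (Suc T) (fst x) (snd x)))
           + (\<Sum>\<tau>\<in>trajectories T. traj_prob T p1 p \<pi> \<tau> * G \<tau>)"
      by (simp add: one sum.distrib)
    also have "\<dots> \<le> 0 + 0"
    proof (rule add_mono)
      show "(\<Sum>\<tau>\<in>trajectories T. traj_prob T p1 p \<pi> \<tau> * (\<Sum>x\<in>UNIV. \<pi> (Suc T) (fst x) (snd x) * p (fst (\<tau> T)) (snd (\<tau> T)) (fst x) * h (Suc T) (fst x) (snd x))) \<le> 0"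
        using IH inner by (intro sum_nonpos) (simp add: mult_nonneg_nonpos)
      show "(\<Sum>\<tau>\<in>trajectories T. traj_prob T p1 p \<pi> \<tau> * G \<tau>) \<le> 0"
        using IH HT unfolding G_def by blast
    qed
    finally show "(\<Sum>\<tau>\<in>trajectories (Suc T). traj_prob (Suc T) p1 p \<pi> \<tau> * (\<Sum>t=1..Suc T. h t (fst (\<tau> t)) (snd (\<tau> t)))) \<le> 0"
      by simp
  qed
  ultimately show ?case by blast
qed


lemma gibbs_pt:
  fixes q x :: real assumes "q \<ge> 0"
  shows "q * (x - ln q) \<le> exp x - q"
proof (cases "q = 0")
  case True then show ?thesis by simp
next
  case False
  then have q: "q > 0" using assms by simp
  have "ln (exp x / q) \<le> exp x / q - 1" by (rule ln_le_minus_one) (use q in simp)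
  then have "x - ln q \<le> exp x / q - 1" using q by (simp add: ln_div)
  then have "q * (x - ln q) \<le> q * (exp x / q - 1)" using q by (simp add: mult_left_mono)
  also have "\<dots> = exp x - q" using q by (simp add: algebra_simps)
  finally show ?thesis .
qed

theorem corollary3:
  fixes T :: nat
    and p1 :: "'s::finite \<Rightarrow> real"
    and p :: "'s \<Rightarrow> 'a::finite \<Rightarrow> 's \<Rightarrow> real"
    and R :: "('s \<Rightarrow> 'a \<Rightarrow> real) set"
    and rs :: "'s \<Rightarrow> 'a \<Rightarrow> real"
    and \<pi> :: "nat \<Rightarrow> 's \<Rightarrow> 'a \<Rightarrow> real"
  assumes "T \<ge> 1"
    and "valid_mdp p1 p"
    and "R \<noteq> {}"
    and "rs \<in> Rstar R"
    and "\<pi> \<in> policies T"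
  shows "maxent_J T p1 p \<pi> rs \<le> (INF r'\<in>R. expected_return T p1 p \<pi> r')"
proof -
  have R: "\<And>r'. r' \<in> R \<Longrightarrow> maxent_J T p1 p \<pi> rs \<le> expected_return T p1 p \<pi> r'"
  proof -
    fix r' assume r': "r' \<in> R"
    define h where "h t s a = rs s a - r' s a - ln (\<pi> t s a)" for t s a
    have H: "\<forall>t\<in>{1..T}. \<forall>s. (\<Sum>a\<in>UNIV. \<pi> t s a * h t s a) \<le> 0"
    proof (intro ballI allI)
      fix t s assume t: "t \<in> {1..T}"
      have pol: "\<And>a. \<pi> t s a \<ge> 0" "(\<Sum>a\<in>UNIV. \<pi> t s a) = 1"
        using assms(5) t by (auto simp: policies_def)
      have "(\<Sum>a\<in>UNIV. \<pi> t s a * h t s a) \<le> (\<Sum>a\<in>UNIV. exp (rs s a - r' s a) - \<pi> t s a)"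
        unfolding h_def by (intro sum_mono gibbs_pt pol)
      also have "\<dots> = (\<Sum>a\<in>UNIV. exp (rs s a - r' s a)) - 1" by (simp add: sum_subtractf pol)
      also have "\<dots> \<le> 0" using assms(4) r' by (auto simp: Rstar_def)
      finally show "(\<Sum>a\<in>UNIV. \<pi> t s a * h t s a) \<le> 0" .
    qed
    have M: "(\<Sum>\<tau>\<in>trajectories T. traj_prob T p1 p \<pi> \<tau> * (\<Sum>t=1..T. h t (fst (\<tau> t)) (snd (\<tau> t)))) \<le> 0"
      using main_ind[OF assms(1,2,5)] H by blast
    have "maxent_J T p1 p \<pi> rs = expected_return T p1 p \<pi> r' +
        (\<Sum>\<tau>\<in>trajectories T. traj_prob T p1 p \<pi> \<tau> * (\<Sum>t=1..T. h t (fst (\<tau> t)) (snd (\<tau> t))))"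
      unfolding maxent_J_def expected_return_def causal_entropy_def traj_expect_def h_def
      by (simp add: sum.distrib[symmetric] sum_subtractf algebra_simps sum_distrib_left)
    then show "maxent_J T p1 p \<pi> rs \<le> expected_return T p1 p \<pi> r'" using M by simp
  qed
  show ?thesis by (rule cINF_greatest[OF assms(3)]) (rule R)
qed

end
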